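(* For any distinct $f_0,f_1\in\Delta(\mathcal{G})$ there exists a vertex-transitive graph $G$ such that $f_0(G)\neq f_1(G)$.
   Context: $\mathcal{G}$ is the class of finite simple graphs. $E_n$ is the graph with $n$ vertices and no edges; $\sqcup$ is disjoint union; $\boxtimes$ is the strong product (vertex set $V(G)\times V(H)$, distinct $(g,h),(g',h')$ adjacent iff ($g=g'$ or $gg'\in E(G)$) and ($h=h'$ or $hh'\in E(H)$)). A cohomomorphism $G\to H$ is a map $V(G)\to V(H)$ sending distinct non-adjacent vertices to distinct non-adjacent vertices; $G\le_{\mathcal{G}}H$ if one exists. $\Delta(\mathcal{G})$ is the set of functions $f:\mathcal{G}\to\mathbb{R}_{\ge0}$ with $f(E_n)=n$, $f(G\boxtimes H)=f(G)f(H)$, $f(G\sqcup H)=f(G)+f(H)$, and $f(G)\le f(H)$ whenever $G\le_{\mathcal{G}}H$. *)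

theory Defs
  imports Complex_Main "HOL-Library.Nat_Bijection"
begin

text \<open>Finite simple graphs with vertices drawn from nat (every finite simple graph
is isomorphic to one of these; all functions in Delta are isomorphism invariant
because isomorphisms are cohomomorphisms in both directions).\<close>

definition wf_graph :: "nat set \<times> (nat \<times> nat) set \<Rightarrow> bool" where
  "wf_graph VE \<longleftrightarrow> finite (fst VE) \<and> snd VE \<subseteq> fst VE \<times> fst VE
     \<and> (\<forall>x y. (x, y) \<in> snd VE \<longrightarrow> (y, x) \<in> snd VE)
     \<and> (\<forall>x. (x, x) \<notin> snd VE)"

typedef graph = "{VE. wf_graph VE}"
  by (rule exI[of _ "({}, {})"]) (simp add: wf_graph_def)

definition gV :: "graph \<Rightarrow> nat set" where "gV G = fst (Rep_graph G)"
definition gE :: "graph \<Rightarrow> (nat \<times> nat) set" where "gE G = snd (Rep_graph G)"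

definition adj :: "graph \<Rightarrow> nat \<Rightarrow> nat \<Rightarrow> bool" where
  "adj G x y \<longleftrightarrow> (x, y) \<in> gE G"

definition empty_graph :: "nat \<Rightarrow> graph" where
  "empty_graph n = Abs_graph ({0..<n}, {})"

definition disj_union :: "graph \<Rightarrow> graph \<Rightarrow> graph" where
  "disj_union G H = Abs_graph
     ((\<lambda>v. 2 * v) ` gV G \<union> (\<lambda>v. 2 * v + 1) ` gV H,
      (\<lambda>(x, y). (2 * x, 2 * y)) ` gE G \<union> (\<lambda>(x, y). (2 * x + 1, 2 * y + 1)) ` gE H)"

definition strong_prod :: "graph \<Rightarrow> graph \<Rightarrow> graph" where
  "strong_prod G H = Abs_graph
     (prod_encode ` (gV G \<times> gV H),
      {(prod_encode (g, h), prod_encode (g', h')) | g h g' h'.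
         g \<in> gV G \<and> g' \<in> gV G \<and> h \<in> gV H \<and> h' \<in> gV H \<and> (g, h) \<noteq> (g', h') \<and>
         (g = g' \<or> adj G g g') \<and> (h = h' \<or> adj H h h')})"

definition cohom :: "graph \<Rightarrow> graph \<Rightarrow> (nat \<Rightarrow> nat) \<Rightarrow> bool" where
  "cohom G H \<phi> \<longleftrightarrow> \<phi> ` gV G \<subseteq> gV H \<and>
     (\<forall>x\<in>gV G. \<forall>y\<in>gV G. x \<noteq> y \<and> \<not> adj G x y \<longrightarrow> \<phi> x \<noteq> \<phi> y \<and> \<not> adj H (\<phi> x) (\<phi> y))"

definition graph_le :: "graph \<Rightarrow> graph \<Rightarrow> bool" where
  "graph_le G H \<longleftrightarrow> (\<exists>\<phi>. cohom G H \<phi>)"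

definition Delta :: "(graph \<Rightarrow> real) set" where
  "Delta = {f. (\<forall>G. f G \<ge> 0)
     \<and> (\<forall>n. f (empty_graph n) = real n)
     \<and> (\<forall>G H. f (strong_prod G H) = f G * f H)
     \<and> (\<forall>G H. f (disj_union G H) = f G + f H)
     \<and> (\<forall>G H. graph_le G H \<longrightarrow> f G \<le> f H)}"

definition automorphism :: "graph \<Rightarrow> (nat \<Rightarrow> nat) \<Rightarrow> bool" where
  "automorphism G \<sigma> \<longleftrightarrow> bij_betw \<sigma> (gV G) (gV G) \<and>
     (\<forall>x\<in>gV G. \<forall>y\<in>gV G. adj G (\<sigma> x) (\<sigma> y) \<longleftrightarrow> adj G x y)"

definition vertex_transitive :: "graph \<Rightarrow> bool" where
  "vertex_transitive G \<longleftrightarrow> (\<forall>u\<in>gV G. \<forall>v\<in>gV G. \<exists>\<sigma>. automorphism G \<sigma> \<and> \<sigma> u = v)"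

end

theory Submission imports Defs "HOL-Combinatorics.Permutations" "HOL-Library.FuncSet" "HOL-Real_Asymp.Real_Asymp" begin

lemma wf_Rep: "wf_graph (Rep_graph G)" using Rep_graph by simp

lemma gV_finite: "finite (gV G)" using wf_Rep[of G] by (simp add: wf_graph_def gV_def)
lemma adj_sym: "adj G x y \<Longrightarrow> adj G y x" using wf_Rep[of G] by (simp add: wf_graph_def gE_def adj_def)
lemma adj_irrefl: "\<not> adj G x x" using wf_Rep[of G] by (simp add: wf_graph_def gE_def adj_def)
lemma adj_V: "adj G x y \<Longrightarrow> x \<in> gV G \<and> y \<in> gV G"
  using wf_Rep[of G] by (auto simp add: wf_graph_def gE_def adj_def gV_def)

lemma gV_Abs: "wf_graph X \<Longrightarrow> gV (Abs_graph X) = fst X"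
  by (simp add: gV_def Abs_graph_inverse)
lemma gE_Abs: "wf_graph X \<Longrightarrow> gE (Abs_graph X) = snd X"
  by (simp add: gE_def Abs_graph_inverse)
lemma adj_Abs: "wf_graph X \<Longrightarrow> adj (Abs_graph X) x y \<longleftrightarrow> (x,y) \<in> snd X"
  by (simp add: adj_def gE_Abs)

lemma graph_eqI: "gV G = gV H \<Longrightarrow> gE G = gE H \<Longrightarrow> G = H"
  by (metis Rep_graph_inject gE_def gV_def prod.collapse)

lemma Delta_le: "f \<in> Delta \<Longrightarrow> graph_le G H \<Longrightarrow> f G \<le> f H" by (simp add: Delta_def)
lemma Delta_empty: "f \<in> Delta \<Longrightarrow> f (empty_graph n) = real n" by (simp add: Delta_def)
lemma Delta_prod: "f \<in> Delta \<Longrightarrow> f (strong_prod G H) = f G * f H" by (simp add: Delta_def)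
lemma Delta_union: "f \<in> Delta \<Longrightarrow> f (disj_union G H) = f G + f H" by (simp add: Delta_def)

lemma wf_empty: "wf_graph ({0..<n}, {})" by (simp add: wf_graph_def)
lemma gV_empty[simp]: "gV (empty_graph n) = {0..<n}" by (simp add: empty_graph_def gV_Abs[OF wf_empty])
lemma gE_empty[simp]: "gE (empty_graph n) = {}" by (simp add: empty_graph_def gE_Abs[OF wf_empty])

lemma wf_union: "wf_graph ((\<lambda>v. 2 * v) ` gV G \<union> (\<lambda>v. 2 * v + 1) ` gV H,
      (\<lambda>(x, y). (2 * x, 2 * y)) ` gE G \<union> (\<lambda>(x, y). (2 * x + 1, 2 * y + 1)) ` gE H)"
  unfolding wf_graph_def using gV_finite[of G] gV_finite[of H]
  using adj_sym[of G] adj_sym[of H] adj_irrefl[of G] adj_irrefl[of H] adj_V[of G] adj_V[of H]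
  by (auto simp: adj_def)

lemma gV_union: "gV (disj_union G H) = (\<lambda>v. 2 * v) ` gV G \<union> (\<lambda>v. 2 * v + 1) ` gV H"
  unfolding disj_union_def gV_Abs[OF wf_union] by simp
lemma adj_union: "adj (disj_union G H) x y \<longleftrightarrow>
   (\<exists>a b. x = 2*a \<and> y = 2*b \<and> adj G a b) \<or> (\<exists>a b. x = 2*a+1 \<and> y = 2*b+1 \<and> adj H a b)"
  unfolding disj_union_def adj_Abs[OF wf_union] by (auto simp add: adj_def)

definition rel :: "graph \<Rightarrow> nat \<Rightarrow> nat \<Rightarrow> bool" where "rel G a b \<longleftrightarrow> a = b \<or> adj G a b"

lemma wf_prod: "wf_graph (prod_encode ` (gV G \<times> gV H),
      {(prod_encode (g, h), prod_encode (g', h')) | g h g' h'.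
         g \<in> gV G \<and> g' \<in> gV G \<and> h \<in> gV H \<and> h' \<in> gV H \<and> (g, h) \<noteq> (g', h') \<and>
         (g = g' \<or> adj G g g') \<and> (h = h' \<or> adj H h h')})"
  unfolding wf_graph_def using gV_finite[of G] gV_finite[of H]
  using adj_sym[of G] adj_sym[of H] 
  by (auto simp: prod_encode_eq)

lemma gV_prod: "gV (strong_prod G H) = prod_encode ` (gV G \<times> gV H)"
  unfolding strong_prod_def gV_Abs[OF wf_prod] by simp
lemma adj_prod: "adj (strong_prod G H) (prod_encode (g,h)) (prod_encode (g',h')) \<longleftrightarrow>
   g \<in> gV G \<and> g' \<in> gV G \<and> h \<in> gV H \<and> h' \<in> gV H \<and> (g, h) \<noteq> (g', h') \<and> rel G g g' \<and> rel H h h'"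
  unfolding strong_prod_def adj_Abs[OF wf_prod] by (simp add: rel_def)

lemma iso_le:
  assumes "bij_betw \<phi> (gV G) (gV H)" "\<And>x y. x \<in> gV G \<Longrightarrow> y \<in> gV G \<Longrightarrow> adj H (\<phi> x) (\<phi> y) \<longleftrightarrow> adj G x y"
  shows "graph_le G H"
  unfolding graph_le_def cohom_def
  using assms by (metis bij_betw_def bij_betw_imp_surj_on image_eqI inj_on_eq_iff subsetI)

lemma iso_le2:
  assumes "bij_betw \<phi> (gV G) (gV H)" "\<And>x y. x \<in> gV G \<Longrightarrow> y \<in> gV G \<Longrightarrow> adj H (\<phi> x) (\<phi> y) \<longleftrightarrow> adj G x y"
  shows "graph_le H G"
proof -
  let ?\<psi> = "inv_into (gV G) \<phi>"
  have b: "bij_betw ?\<psi> (gV H) (gV G)" by (rule bij_betw_inv_into[OF assms(1)])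
  have "adj G (?\<psi> x) (?\<psi> y) \<longleftrightarrow> adj H x y" if "x \<in> gV H" "y \<in> gV H" for x y
  proof -
    have "?\<psi> x \<in> gV G" "?\<psi> y \<in> gV G" using b that bij_betw_apply by metis+
    moreover have "\<phi> (?\<psi> x) = x" "\<phi> (?\<psi> y) = y" using assms(1) that by (simp_all add: bij_betw_inv_into_right)
    ultimately show ?thesis using assms(2) by metis
  qed
  then show ?thesis using iso_le[OF b] by blast
qed

lemma iso_eq:
  assumes "f \<in> Delta" "bij_betw \<phi> (gV G) (gV H)" "\<And>x y. x \<in> gV G \<Longrightarrow> y \<in> gV G \<Longrightarrow> adj H (\<phi> x) (\<phi> y) \<longleftrightarrow> adj G x y"
  shows "f G = f H"
  using Delta_le[OF assms(1) iso_le[OF assms(2,3)]] Delta_le[OF assms(1) iso_le2[OF assms(2,3)]] by simp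


definition induced :: "graph \<Rightarrow> nat set \<Rightarrow> graph" where
  "induced H A = Abs_graph (gV H \<inter> A, gE H \<inter> (A \<times> A))"

lemma wf_induced: "wf_graph (gV H \<inter> A, gE H \<inter> (A \<times> A))"
  unfolding wf_graph_def using gV_finite[of H] adj_sym[of H] adj_irrefl[of H] adj_V[of H]
  by (auto simp: adj_def)

lemma gV_induced[simp]: "gV (induced H A) = gV H \<inter> A"
  unfolding induced_def gV_Abs[OF wf_induced] by simp
lemma gE_induced[simp]: "gE (induced H A) = gE H \<inter> (A \<times> A)"
  unfolding induced_def gE_Abs[OF wf_induced] by simp
lemma adj_induced[simp]: "adj (induced H A) x y \<longleftrightarrow> adj H x y \<and> x \<in> A \<and> y \<in> A"
  by (auto simp: adj_def)

lemma induced_induced: "induced (induced H A) B = induced H (A \<inter> B)"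
  by (rule graph_eqI) auto

lemma induced_UNIV: "induced H UNIV = H"
  by (rule graph_eqI) auto

lemma induced_le: "graph_le (induced H A) H"
  unfolding graph_le_def cohom_def by (rule exI[of _ id]) auto

lemma split_le: "graph_le H (disj_union (induced H A) (induced H (- A)))"
  unfolding graph_le_def cohom_def
apply (rule exI[of _ "\<lambda>v. if v \<in> A then 2*v else 2*v+1"])
  apply (auto simp: gV_union adj_union; presburger)
  done

lemma empty_le: "gV H = {} \<Longrightarrow> graph_le H (empty_graph 0)"
  unfolding graph_le_def cohom_def by auto

lemma cover_le:
  assumes f: "f \<in> Delta" and C: "finite C"
  shows "gV H \<subseteq> (\<Union>c\<in>C. S c) \<Longrightarrow> f H \<le> (\<Sum>c\<in>C. f (induced H (S c)))"
  using C
proof (induction C arbitrary: H rule: finite_induct)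
  case empty
  then show ?case using Delta_le[OF f empty_le[of H]] Delta_empty[OF f, of 0] by simp
next
  case (insert c C)
  let ?H' = "induced H (- S c)"
  have "f H \<le> f (induced H (S c)) + f ?H'"
    using Delta_le[OF f split_le[of H "S c"]] Delta_union[OF f] by simp
  also have "f ?H' \<le> (\<Sum>c'\<in>C. f (induced ?H' (S c')))"
    using insert.prems by (intro insert.IH) auto
  also have "\<dots> \<le> (\<Sum>c'\<in>C. f (induced H (S c')))"
  proof (rule sum_mono)
    fix c' assume "c' \<in> C"
    have "induced ?H' (S c') = induced (induced H (S c')) (- S c)"
      by (simp add: induced_induced Int_commute)
    then show "f (induced ?H' (S c')) \<le> f (induced H (S c'))"
      using Delta_le[OF f induced_le] by metis
  qed
  finally show ?case using insert.hyps by simp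
qed

definition lists_of :: "graph \<Rightarrow> nat \<Rightarrow> nat list set" where
  "lists_of G n = {xs. length xs = n \<and> set xs \<subseteq> gV G}"

definition pw :: "graph \<Rightarrow> nat \<Rightarrow> graph" where
  "pw G n = Abs_graph (list_encode ` lists_of G n,
     {(list_encode xs, list_encode ys) | xs ys. xs \<in> lists_of G n \<and> ys \<in> lists_of G n \<and> xs \<noteq> ys
        \<and> list_all2 (rel G) xs ys})"

lemma finite_lists_of: "finite (lists_of G n)"
proof -
  have "lists_of G n = {xs. set xs \<subseteq> gV G \<and> length xs = n}" by (auto simp: lists_of_def)
  then show ?thesis using finite_lists_length_eq[OF gV_finite] by simp
qed

lemma rel_sym: "rel G a b \<Longrightarrow> rel G b a" by (auto simp: rel_def adj_sym)
lemma rel_refl: "rel G a a" by (simp add: rel_def)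

lemma list_all2_rel_sym: "list_all2 (rel G) xs ys \<Longrightarrow> list_all2 (rel G) ys xs"
  by (simp add: list_all2_conv_all_nth rel_sym)

lemma wf_pw: "wf_graph (list_encode ` lists_of G n,
     {(list_encode xs, list_encode ys) | xs ys. xs \<in> lists_of G n \<and> ys \<in> lists_of G n \<and> xs \<noteq> ys
        \<and> list_all2 (rel G) xs ys})"
  unfolding wf_graph_def using finite_lists_of[of G n] list_all2_rel_sym[of G]
  by (auto simp: list_encode_eq)

lemma gV_pw: "gV (pw G n) = list_encode ` lists_of G n"
  unfolding pw_def gV_Abs[OF wf_pw] by simp

lemma adj_pw: "adj (pw G n) (list_encode xs) (list_encode ys) \<longleftrightarrow>
   xs \<in> lists_of G n \<and> ys \<in> lists_of G n \<and> xs \<noteq> ys \<and> list_all2 (rel G) xs ys"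
  unfolding pw_def adj_Abs[OF wf_pw] by (auto simp: list_encode_eq)

lemma rel_pw: "xs \<in> lists_of G n \<Longrightarrow> ys \<in> lists_of G n \<Longrightarrow>
   rel (pw G n) (list_encode xs) (list_encode ys) \<longleftrightarrow> list_all2 (rel G) xs ys"
  unfolding rel_def adj_pw
  by (auto simp: list_encode_eq list_all2_conv_all_nth lists_of_def rel_refl)

lemma pw_0: "pw G 0 = empty_graph 1"
proof (rule graph_eqI)
  show "gV (pw G 0) = gV (empty_graph 1)"
    by (auto simp: gV_pw lists_of_def)
  show "gE (pw G 0) = gE (empty_graph 1)"
    unfolding pw_def gE_Abs[OF wf_pw] by (auto simp: lists_of_def)
qed

lemma lists_of_Suc: "x # xs \<in> lists_of G (Suc n) \<longleftrightarrow> x \<in> gV G \<and> xs \<in> lists_of G n"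
  by (auto simp: lists_of_def)

lemma lists_of_SucE: "zs \<in> lists_of G (Suc n) \<Longrightarrow> \<exists>x xs. zs = x # xs \<and> x \<in> gV G \<and> xs \<in> lists_of G n"
  by (cases zs) (auto simp: lists_of_def)

lemma pw_Suc:
  assumes f: "f \<in> Delta"
  shows "f (pw G (Suc n)) = f (strong_prod G (pw G n))"
proof (rule iso_eq[OF f])
  let ?\<phi> = "\<lambda>v. prod_encode (hd (list_decode v), list_encode (tl (list_decode v)))"
  let ?\<psi> = "\<lambda>w. list_encode (fst (prod_decode w) # list_decode (snd (prod_decode w)))"
  show "bij_betw ?\<phi> (gV (pw G (Suc n))) (gV (strong_prod G (pw G n)))"
  proof (rule bij_betw_byWitness[where f'="?\<psi>"])
    show "\<forall>a\<in>gV (pw G (Suc n)). ?\<psi> (?\<phi> a) = a"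
      by (auto simp: gV_pw dest!: lists_of_SucE)
    show "\<forall>a\<in>gV (strong_prod G (pw G n)). ?\<phi> (?\<psi> a) = a"
      by (auto simp: gV_prod gV_pw)
    show "?\<phi> ` gV (pw G (Suc n)) \<subseteq> gV (strong_prod G (pw G n))"
      by (auto simp: gV_pw gV_prod dest!: lists_of_SucE)
    show "?\<psi> ` gV (strong_prod G (pw G n)) \<subseteq> gV (pw G (Suc n))"
    proof
      fix z assume "z \<in> ?\<psi> ` gV (strong_prod G (pw G n))"
      then obtain a xs where "a \<in> gV G" "xs \<in> lists_of G n" "z = ?\<psi> (prod_encode (a, list_encode xs))"
        by (auto simp: gV_pw gV_prod simp del: list_encode.simps)
      then show "z \<in> gV (pw G (Suc n))"
        unfolding gV_pw by (intro image_eqI[of _ _ "a # xs"]) (auto simp: lists_of_Suc simp del: list_encode.simps)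
    qed
  qed
  fix v w assume "v \<in> gV (pw G (Suc n))" "w \<in> gV (pw G (Suc n))"
  then obtain x xs y ys where v: "v = list_encode (x # xs)" "x \<in> gV G" "xs \<in> lists_of G n"
    and w: "w = list_encode (y # ys)" "y \<in> gV G" "ys \<in> lists_of G n"
    by (auto simp: gV_pw dest!: lists_of_SucE)
  show "adj (strong_prod G (pw G n)) (?\<phi> v) (?\<phi> w) \<longleftrightarrow> adj (pw G (Suc n)) v w"
    using v w by (simp add: adj_prod adj_pw gV_pw rel_pw lists_of_Suc list_encode_eq del: list_encode.simps)
qed

lemma pw_power:
  assumes f: "f \<in> Delta"
  shows "f (pw G n) = f G ^ n"
proof (induction n)
  case 0
  then show ?case using Delta_empty[OF f, of 1] by (simp add: pw_0)
next
  case (Suc n)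
  then show ?case using pw_Suc[OF f] Delta_prod[OF f] by simp
qed

definition orb :: "graph \<Rightarrow> (nat \<Rightarrow> nat) \<Rightarrow> nat set" where
  "orb G c = list_encode ` {xs. \<forall>v\<in>gV G. count (mset xs) v = c v}"

lemma list_all2_permute:
  assumes "q permutes {..<length xs}" "list_all2 R xs ys"
  shows "list_all2 R (permute_list q xs) (permute_list q ys)"
proof -
  have len: "length ys = length xs" using assms(2) by (simp add: list_all2_lengthD)
  have q2: "q permutes {..<length ys}" using assms(1) len by simp
  show ?thesis using assms(2) permutes_in_image[OF assms(1)]
    by (auto simp: list_all2_conv_all_nth permute_list_nth[OF assms(1)] permute_list_nth[OF q2] len)
qed

lemma permute_inv1:
  assumes "p permutes {..<length zs}"
  shows "permute_list (inv p) (permute_list p zs) = zs"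
proof -
  have "inv p permutes {..<length zs}" using assms by (rule permutes_inv)
  then have "permute_list (p \<circ> inv p) zs = permute_list (inv p) (permute_list p zs)"
    by (rule permute_list_compose)
  then show ?thesis using permutes_inv_o(1)[OF assms] by simp
qed

lemma permute_inv2:
  assumes "p permutes {..<length zs}"
  shows "permute_list p (permute_list (inv p) zs) = zs"
proof -
  have "permute_list (inv p \<circ> p) zs = permute_list p (permute_list (inv p) zs)"
    using assms by (rule permute_list_compose)
  then show ?thesis using permutes_inv_o(2)[OF assms] by simp
qed

lemma mset_eq_on:
  assumes "set xs \<subseteq> V" "set ys \<subseteq> V" "\<forall>v\<in>V. count (mset xs) v = count (mset ys) v"
  shows "mset xs = mset ys"
proof (rule multiset_eqI)
  fix v show "count (mset xs) v = count (mset ys) v"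
  proof (cases "v \<in> V")
    case False
    then have "v \<notin> set xs" "v \<notin> set ys" using assms by auto
    then show ?thesis by (metis count_mset_0_iff)
  qed (use assms in auto)
qed

lemma vt_orb: "vertex_transitive (induced (pw G n) (orb G c))"
  unfolding vertex_transitive_def
proof (intro ballI)
  let ?W = "gV (induced (pw G n) (orb G c))"
  have W: "?W = list_encode ` {xs. xs \<in> lists_of G n \<and> (\<forall>v\<in>gV G. count (mset xs) v = c v)}"
    by (auto simp: gV_pw orb_def list_encode_eq)
  fix u v assume "u \<in> ?W" "v \<in> ?W"
  then obtain xs ys where xs: "u = list_encode xs" "xs \<in> lists_of G n" "\<forall>v\<in>gV G. count (mset xs) v = c v"
    and ys: "v = list_encode ys" "ys \<in> lists_of G n" "\<forall>v\<in>gV G. count (mset ys) v = c v"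
    unfolding W by blast
  have "mset ys = mset xs" using xs ys by (intro mset_eq_on[of _ "gV G"]) (auto simp: lists_of_def)
  then obtain p where p: "p permutes {..<length xs}" "permute_list p xs = ys"
    by (rule mset_eq_permutation)
  have pn: "p permutes {..<n}" using p xs by (simp add: lists_of_def)
  have pi: "inv p permutes {..<n}" using pn by (rule permutes_inv)
  define \<sigma> where "\<sigma> w = list_encode (permute_list p (list_decode w))" for w
  define \<tau> where "\<tau> w = list_encode (permute_list (inv p) (list_decode w))" for w
  have mem: "list_encode (permute_list q zs) \<in> ?W" if "q permutes {..<n}" "list_encode zs \<in> ?W" for q zs
  proof -
    have z: "zs \<in> lists_of G n" "\<forall>v\<in>gV G. count (mset zs) v = c v"
      using that(2) unfolding W by (auto simp: list_encode_eq)
    have q: "q permutes {..<length zs}" using z that(1) by (simp add: lists_of_def)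
    show ?thesis unfolding W using z q by (auto simp: lists_of_def)
  qed
  have Wlen: "length (list_decode w) = n" if "w \<in> ?W" for w
    using that unfolding W by (auto simp: lists_of_def)
  have aut: "automorphism (induced (pw G n) (orb G c)) \<sigma>"
    unfolding automorphism_def
  proof (intro conjI ballI)
    show "bij_betw \<sigma> ?W ?W"
    proof (rule bij_betw_byWitness[where f'=\<tau>])
      show "\<forall>a\<in>?W. \<tau> (\<sigma> a) = a"
        using Wlen pn by (auto simp: \<sigma>_def \<tau>_def permute_inv1)
      show "\<forall>a\<in>?W. \<sigma> (\<tau> a) = a"
        using Wlen pn by (auto simp: \<sigma>_def \<tau>_def permute_inv2)
      show "\<sigma> ` ?W \<subseteq> ?W"
        using mem[OF pn] unfolding \<sigma>_def by (metis image_subsetI list_decode_inverse)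
      show "\<tau> ` ?W \<subseteq> ?W"
        using mem[OF pi] unfolding \<tau>_def by (metis image_subsetI list_decode_inverse)
    qed
    fix a b assume a: "a \<in> ?W" and b: "b \<in> ?W"
    then obtain as bs where as: "a = list_encode as" "as \<in> lists_of G n"
      and bs: "b = list_encode bs" "bs \<in> lists_of G n"
      unfolding W by blast
    have pa: "p permutes {..<length as}" and pb: "p permutes {..<length bs}"
      using pn as bs by (auto simp: lists_of_def)
    have sa: "\<sigma> a \<in> ?W" "\<sigma> b \<in> ?W" using mem[OF pn] a b unfolding \<sigma>_def by (metis list_decode_inverse)+
    have "permute_list p as \<in> lists_of G n" "permute_list p bs \<in> lists_of G n"
      using as bs pa pb by (auto simp: lists_of_def)
    moreover have "permute_list p as = permute_list p bs \<longleftrightarrow> as = bs"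
      using permute_inv1[OF pa] permute_inv1[OF pb] by metis
    moreover have "list_all2 (rel G) (permute_list p as) (permute_list p bs) \<longleftrightarrow> list_all2 (rel G) as bs"
    proof
      assume "list_all2 (rel G) (permute_list p as) (permute_list p bs)"
      from list_all2_permute[OF _ this, of "inv p"] show "list_all2 (rel G) as bs"
        using pi as pa pb by (simp add: permute_inv1 lists_of_def)
    qed (rule list_all2_permute[OF pa])
    ultimately show "adj (induced (pw G n) (orb G c)) (\<sigma> a) (\<sigma> b) \<longleftrightarrow> adj (induced (pw G n) (orb G c)) a b"
      using sa a b as bs unfolding \<sigma>_def by (simp add: adj_pw del: list_encode.simps)
  qed
  have "\<sigma> u = v" using p xs ys by (simp add: \<sigma>_def)
  then show "\<exists>\<sigma>. automorphism (induced (pw G n) (orb G c)) \<sigma> \<and> \<sigma> u = v" using aut by blast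
qed

lemma asy:
  fixes a b :: real and m :: nat
  assumes "0 \<le> a" "a < b" and H: "\<forall>n::nat. b^n \<le> (real n+1)^m * a^n"
  shows False
proof (cases "a = 0")
  case True
  then show ?thesis using H[rule_format, of 1] assms by simp
next
  case False
  hence a: "a > 0" using assms by simp
  define r where "r = b / a"
  have r: "r > 1" using assms a by (simp add: r_def)
  have "(\<lambda>n::nat. (real n+1)^m / r^n) \<longlonglongrightarrow> 0"
    using r by real_asymp
  then have "eventually (\<lambda>n. (real n+1)^m / r^n < 1) sequentially"
    by (rule order_tendstoD) simp
  then obtain n where "(real n+1)^m / r^n < 1" by (meson eventually_sequentially order.refl)
  moreover have "r^n > 0" using r by simp
  ultimately have "(real n+1)^m < r^n" by (simp add: divide_less_eq)
  moreover have "r^n = b^n / a^n" by (simp add: r_def power_divide)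
  moreover have "b^n \<le> (real n+1)^m * a^n" using H by blast
  ultimately show False using a by (simp add: divide_less_eq field_simps) 
qed

lemma main_dir:
  fixes f0 f1 :: "graph \<Rightarrow> real"
  assumes f0: "f0 \<in> Delta" and f1: "f1 \<in> Delta" and lt: "f0 G < f1 G"
    and vt: "\<forall>H. vertex_transitive H \<longrightarrow> f0 H = f1 H"
  shows False
proof -
  define m where "m = card (gV G)"
  have bound: "f1 G ^ n \<le> (real n + 1) ^ m * f0 G ^ n" for n
  proof -
    define C where "C = PiE (gV G) (\<lambda>_. {..n})"
    have finC: "finite C" unfolding C_def using gV_finite by (simp add: finite_PiE)
    have cardC: "card C = Suc n ^ m"
      unfolding C_def m_def using gV_finite by (simp add: card_PiE)
    have cov: "gV (pw G n) \<subseteq> (\<Union>c\<in>C. orb G c)"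
    proof
      fix w assume "w \<in> gV (pw G n)"
      then obtain xs where xs: "w = list_encode xs" "xs \<in> lists_of G n" by (auto simp: gV_pw)
      let ?c = "restrict (\<lambda>v. count (mset xs) v) (gV G)"
      have "?c \<in> C" unfolding C_def using xs count_le_size[of "mset xs"]
        by (auto simp: lists_of_def)
      moreover have "w \<in> orb G ?c" unfolding orb_def using xs by auto
      ultimately show "w \<in> (\<Union>c\<in>C. orb G c)" by blast
    qed
    have "f1 G ^ n = f1 (pw G n)" using pw_power[OF f1] by simp
    also have "\<dots> \<le> (\<Sum>c\<in>C. f1 (induced (pw G n) (orb G c)))"
      by (rule cover_le[OF f1 finC cov])
    also have "\<dots> = (\<Sum>c\<in>C. f0 (induced (pw G n) (orb G c)))"
      using vt vt_orb by simp
    also have "\<dots> \<le> (\<Sum>c\<in>C. f0 (pw G n))"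
      by (intro sum_mono Delta_le[OF f0 induced_le])
    also have "\<dots> = real (card C) * f0 G ^ n" using pw_power[OF f0] by simp
    also have "\<dots> = (real n + 1) ^ m * f0 G ^ n" using cardC by (simp add: add.commute)
    finally show ?thesis .
  qed
  have "0 \<le> f0 G" using f0 by (simp add: Delta_def)
  then show False using asy[OF _ lt] bound by blast
qed

theorem lemma10:
  fixes f0 f1 :: "graph \<Rightarrow> real"
  assumes "f0 \<in> Delta" and "f1 \<in> Delta" and "f0 \<noteq> f1"
  shows "\<exists>G. vertex_transitive G \<and> f0 G \<noteq> f1 G"
proof (rule ccontr)
  assume "\<not> ?thesis"
  then have vt: "\<forall>H. vertex_transitive H \<longrightarrow> f0 H = f1 H" by blast
  obtain G where "f0 G \<noteq> f1 G" using assms(3) by blast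
  then consider "f0 G < f1 G" | "f1 G < f0 G" by linarith
  then show False
  proof cases
    case 1 then show False using main_dir[OF assms(1,2) _ vt] by blast
  next
    case 2 then show False using main_dir[OF assms(2,1) _] vt by metis
  qed
qed

end
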